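(* Let $(X_n)$ be generated by the $\lambda$-SAGA algorithm (defined in the context) with fixed $\lambda\in[0,1]$ and step $\gamma_n=c/n^\alpha$, where $c>0$ and $1/2<\alpha\le1$. Assume: (A1) $f$ is continuously differentiable with a unique $x^*$ such that $\nabla f(x^* )=0$; (A3) there is $L>0$ with $\frac1N\sum_{k=1}^N\|\nabla f_k(x)-\nabla f_k(x^* )\|^2\le L\|x-x^*\|^2$ for all $x$; (A5) there is $\mu>0$ with $\langle x-x^*,\nabla f(x)\rangle\ge\mu\|x-x^*\|^2$ for all $x$. Suppose $2c\mu\le2^\alpha$, and additionally $2c\mu>1$ if $\alpha=1$. Then there exists $K>0$ such that for all $n\ge1$, $\mathbb E\big[\|X_n-x^*\|^2\big]\le K/n^\alpha$.
   Context: Let $N,d\ge1$ be integers, $f_1,\dots,f_N:\mathbb R^d\to\mathbb R$ differentiable, and $f=\frac1N\sum_{k=1}^N f_k$. The $\lambda$-SAGA algorithm with parameter $\lambda\in[0,1]$ and positive deterministic steps $(\gamma_n)_{n\ge1}$: let $X_0,X_1$ be square-integrable random vectors in $\mathbb R^d$ and $(U_n)_{n\ge2}$ i.i.d. uniform on $\{1,\dots,N\}$, independent of $(X_0,X_1)$. Set $g_{1,k}=\nabla f_k(X_0)$ for $k=1,\dots,N$ and for $n\ge1$: $X_{n+1}=X_n-\gamma_n\Big(\nabla f_{U_{n+1}}(X_n)-\lambda\big(g_{n,U_{n+1}}-\frac1N\sum_{k=1}^N g_{n,k}\big)\Big)$, and $g_{n+1,k}=\nabla f_k(X_n)$ if $U_{n+1}=k$,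 $g_{n+1,k}=g_{n,k}$ otherwise. *)

theory Defs
  imports "HOL-Probability.Probability"
begin

text \<open>Gradients are given as g k x (the gradient of f_k at x), indices k in {1..N}.
  The state at index n >= 1 is (X_n, table g_{n,.}); saga_st m is the state at index m+1.
  u j is the value of U_j.\<close>

primrec saga_st :: "nat \<Rightarrow> (nat \<Rightarrow> 'a::real_normed_vector \<Rightarrow> 'a) \<Rightarrow> real \<Rightarrow> (nat \<Rightarrow> real)
    \<Rightarrow> 'a \<Rightarrow> 'a \<Rightarrow> (nat \<Rightarrow> nat) \<Rightarrow> nat \<Rightarrow> 'a \<times> (nat \<Rightarrow> 'a)" where
  "saga_st N g lam gam x0 x1 u 0 = (x1, (\<lambda>k. g k x0))"
| "saga_st N g lam gam x0 x1 u (Suc m) =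
     (let (x, t) = saga_st N g lam gam x0 x1 u m; n = Suc m; k = u (Suc n) in
       (x - gam n *\<^sub>R (g k x - lam *\<^sub>R (t k - (1 / real N) *\<^sub>R (\<Sum>j\<in>{1..N}. t j))),
        t(k := g k x)))"

fun saga_X :: "nat \<Rightarrow> (nat \<Rightarrow> 'a::real_normed_vector \<Rightarrow> 'a) \<Rightarrow> real \<Rightarrow> (nat \<Rightarrow> real)
    \<Rightarrow> 'a \<Rightarrow> 'a \<Rightarrow> (nat \<Rightarrow> nat) \<Rightarrow> nat \<Rightarrow> 'a" where
  "saga_X N g lam gam x0 x1 u 0 = x0"
| "saga_X N g lam gam x0 x1 u (Suc m) = fst (saga_st N g lam gam x0 x1 u m)"

end

theory Submission imports Defs begin


lemma grad_meas:
  fixes f :: "'a::euclidean_space \<Rightarrow> real"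
  assumes der: "\<And>x. (f has_derivative (\<lambda>h. G x \<bullet> h)) (at x)"
  shows "G \<in> borel_measurable borel"
proof -
  have cont: "continuous_on UNIV f"
    using der has_derivative_continuous continuous_at_imp_continuous_on by blast
  have fm[measurable]: "f \<in> borel_measurable borel"
    by (rule borel_measurable_continuous_onI[OF cont])
  have comp: "(\<lambda>x. G x \<bullet> b) \<in> borel_measurable borel" for b
  proof (rule borel_measurable_LIMSEQ_real[where u = "\<lambda>i x. real (Suc i) * (f (x + (1/real (Suc i)) *\<^sub>R b) - f x)"])
    fix x
    have h1: "((\<lambda>t. x + t *\<^sub>R b) has_derivative (\<lambda>t. t *\<^sub>R b)) (at 0)"
      by (auto intro!: derivative_eq_intros)
    have h2: "(f has_derivative (\<lambda>h. G x \<bullet> h)) (at (x + 0 *\<^sub>R b))" using der by simp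
    have "((\<lambda>t. f (x + t *\<^sub>R b)) has_derivative (\<lambda>t. G x \<bullet> (t *\<^sub>R b))) (at 0)"
      using has_derivative_compose[OF h1 h2] by simp
    then have "((\<lambda>t. f (x + t *\<^sub>R b)) has_real_derivative (G x \<bullet> b)) (at 0)"
      unfolding has_field_derivative_def
    proof -
      assume a: "((\<lambda>t. f (x + t *\<^sub>R b)) has_derivative (\<lambda>t. G x \<bullet> (t *\<^sub>R b))) (at 0)"
      have "(\<lambda>t. G x \<bullet> (t *\<^sub>R b)) = (*) (G x \<bullet> b)" by (auto simp: fun_eq_iff)
      with a show "((\<lambda>t. f (x + t *\<^sub>R b)) has_derivative (*) (G x \<bullet> b)) (at 0)" by simp
    qed
    then have L: "((\<lambda>h. (f (x + h *\<^sub>R b) - f x) / h) \<longlongrightarrow> G x \<bullet> b) (at 0)"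
      unfolding DERIV_def by simp
    have F: "filterlim (\<lambda>i. 1 / real (Suc i)) (at 0) sequentially"
      unfolding filterlim_at
      using LIMSEQ_inverse_real_of_nat by (simp add: inverse_eq_divide)
    have "(\<lambda>i. (f (x + (1 / real (Suc i)) *\<^sub>R b) - f x) / (1 / real (Suc i))) \<longlonglongrightarrow> G x \<bullet> b"
      using filterlim_compose[OF L F] by (simp add: o_def)
    then show "(\<lambda>i. real (Suc i) * (f (x + (1/real (Suc i)) *\<^sub>R b) - f x)) \<longlonglongrightarrow> G x \<bullet> b"
      by (simp add: field_simps)
  qed measurable
  have "G = (\<lambda>x. \<Sum>b\<in>Basis. (G x \<bullet> b) *\<^sub>R b)"
    by (simp add: euclidean_representation)
  also have "\<dots> \<in> borel_measurable borel"
    using comp by measurable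
  finally show ?thesis .
qed

definition cl :: "nat \<Rightarrow> nat \<Rightarrow> nat" where
  "cl N k = (if k \<in> {1..N} then k else 1)"

definition sstep :: "nat \<Rightarrow> (nat \<Rightarrow> 'a::real_normed_vector \<Rightarrow> 'a) \<Rightarrow> real \<Rightarrow> real
    \<Rightarrow> 'a \<times> (nat \<Rightarrow> 'a) \<Rightarrow> nat \<Rightarrow> 'a \<times> (nat \<Rightarrow> 'a)" where
  "sstep N g lam gm st k = (fst st - gm *\<^sub>R (g k (fst st) - lam *\<^sub>R (snd st k - (1 / real N) *\<^sub>R (\<Sum>j\<in>{1..N}. snd st j))),
      (snd st)(k := g k (fst st)))"

lemma saga_st_Suc':
  "saga_st N g lam gam x0 x1 u (Suc m) = sstep N g lam (gam (Suc m)) (saga_st N g lam gam x0 x1 u m) (u (Suc (Suc m)))"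
  by (simp add: sstep_def Let_def split: prod.split)

lemma saga_st_cong:
  "(\<And>j. 2 \<le> j \<Longrightarrow> j \<le> Suc m \<Longrightarrow> u j = v j) \<Longrightarrow> saga_st N g lam gam x0 x1 u m = saga_st N g lam gam x0 x1 v m"
proof (induction m)
  case 0 then show ?case by simp
next
  case (Suc m)
  have "saga_st N g lam gam x0 x1 u m = saga_st N g lam gam x0 x1 v m"
    using Suc.prems by (intro Suc.IH) auto
  moreover have "u (Suc (Suc m)) = v (Suc (Suc m))" using Suc.prems by auto
  ultimately show ?case by (simp only: saga_st_Suc')
qed

lemma saga_meas:
  fixes g :: "nat \<Rightarrow> 'a::euclidean_space \<Rightarrow> 'a"
  assumes gm: "\<And>k. k\<in>{1..N} \<Longrightarrow> g k \<in> borel_measurable borel"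
    and x0[measurable]: "x0 \<in> borel_measurable S" and x1[measurable]: "x1 \<in> borel_measurable S"
    and u: "\<And>j. u j \<in> measurable S (count_space UNIV)"
    and uN: "\<And>j s. s \<in> space S \<Longrightarrow> u j s \<in> {1..N}"
  shows "(\<lambda>s. fst (saga_st N g lam gam (x0 s) (x1 s) (\<lambda>j. u j s) m)) \<in> borel_measurable S \<and>
    (\<forall>k\<in>{1..N}. (\<lambda>s. snd (saga_st N g lam gam (x0 s) (x1 s) (\<lambda>j. u j s) m) k) \<in> borel_measurable S)"
proof (induction m)
  case 0
  have "(\<lambda>s. g k (x0 s)) \<in> borel_measurable S" if "k \<in> {1..N}" for k
    using measurable_compose[OF x0 gm[OF that]] by (simp add: o_def)
  then show ?case by simp
next
  case (Suc m)
  define F where "F s = saga_st N g lam gam (x0 s) (x1 s) (\<lambda>j. u j s) m" for s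
  have xm[measurable]: "(\<lambda>s. fst (F s)) \<in> borel_measurable S" using Suc F_def by simp
  have tm[measurable]: "(\<lambda>s. snd (F s) k) \<in> borel_measurable S" if "k \<in> {1..N}" for k
    using Suc F_def that by simp
  have uc: "u j \<in> measurable S (count_space {1..N})" for j
    unfolding measurable_count_space_eq2[OF finite_atLeastAtMost]
    using uN measurable_sets[OF u, of "{_}"] by auto
  have gx: "(\<lambda>s. g k (fst (F s))) \<in> borel_measurable S" if "k \<in> {1..N}" for k
    using measurable_compose[OF xm gm[OF that]] by (simp add: o_def)
  have sm[measurable]: "(\<lambda>s. \<Sum>j\<in>{1..N}. snd (F s) j) \<in> borel_measurable S"
    using tm by (intro borel_measurable_sum) auto
  have A: "(\<lambda>s. fst (F s) - gam (Suc m) *\<^sub>R (g k (fst (F s)) - lam *\<^sub>R (snd (F s) k - (1 / real N) *\<^sub>R (\<Sum>j\<in>{1..N}. snd (F s) j))))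
      \<in> borel_measurable S" if "k \<in> {1..N}" for k
    using gx[OF that] tm[OF that] by measurable
  have B: "(\<lambda>s. ((snd (F s))(k := g k (fst (F s)))) i) \<in> borel_measurable S" if "k \<in> {1..N}" "i \<in> {1..N}" for k i
    using gx[OF that(1)] tm[OF that(2)] by (cases "i = k") simp_all
  have "(\<lambda>s. fst (sstep N g lam (gam (Suc m)) (F s) (u (Suc (Suc m)) s))) \<in> borel_measurable S"
    unfolding sstep_def fst_conv
    by (rule measurable_compose_countable'[where f="\<lambda>k s. fst (F s) - gam (Suc m) *\<^sub>R (g k (fst (F s)) - lam *\<^sub>R (snd (F s) k - (1 / real N) *\<^sub>R (\<Sum>j\<in>{1..N}. snd (F s) j)))", OF A uc]) auto
  moreover have "(\<lambda>s. snd (sstep N g lam (gam (Suc m)) (F s) (u (Suc (Suc m)) s)) i) \<in> borel_measurable S"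
    if "i \<in> {1..N}" for i
    unfolding sstep_def snd_conv
    by (rule measurable_compose_countable'[where f="\<lambda>k s. ((snd (F s))(k := g k (fst (F s)))) i", OF B[OF _ that] uc]) auto
  ultimately show ?case by (simp del: saga_st.simps add: saga_st_Suc' F_def)
qed

lemma norm3_sq:
  fixes a b c :: "'a::real_normed_vector"
  shows "(norm (a + b + c))\<^sup>2 \<le> 3 * ((norm a)\<^sup>2 + (norm b)\<^sup>2 + (norm c)\<^sup>2)"
proof -
  have "norm (a + b + c) \<le> norm a + norm b + norm c"
    by (rule order_trans[OF norm_triangle_ineq]) (simp add: norm_triangle_ineq)
  then have "(norm (a + b + c))\<^sup>2 \<le> (norm a + norm b + norm c)\<^sup>2"
    by (simp add: power_mono)
  also have "\<dots> \<le> 3 * ((norm a)\<^sup>2 + (norm b)\<^sup>2 + (norm c)\<^sup>2)"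
  proof -
    have "0 \<le> (norm a - norm b)\<^sup>2 + (norm a - norm c)\<^sup>2 + (norm b - norm c)\<^sup>2" by simp
    then show ?thesis by (simp add: power2_eq_square algebra_simps)
  qed
  finally show ?thesis .
qed

lemma variance_le:
  fixes b :: "nat \<Rightarrow> 'a::real_inner"
  assumes "finite K" "K \<noteq> {}"
  shows "(\<Sum>k\<in>K. (norm (b k - (1 / real (card K)) *\<^sub>R (\<Sum>j\<in>K. b j)))\<^sup>2) \<le> (\<Sum>k\<in>K. (norm (b k))\<^sup>2)"
proof -
  define n where "n = real (card K)"
  have n: "n > 0" using assms by (simp add: n_def card_gt_0_iff)
  define m where "m = (1 / n) *\<^sub>R (\<Sum>j\<in>K. b j)"
  have sm: "(\<Sum>j\<in>K. b j) = n *\<^sub>R m" using n by (simp add: m_def)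
  have "(\<Sum>k\<in>K. (norm (b k - m))\<^sup>2) = (\<Sum>k\<in>K. (norm (b k))\<^sup>2 - 2 * (b k \<bullet> m) + (norm m)\<^sup>2)"
    by (intro sum.cong refl) (simp add: power2_norm_eq_inner inner_diff_left inner_diff_right inner_commute)
  also have "\<dots> = (\<Sum>k\<in>K. (norm (b k))\<^sup>2) - 2 * ((\<Sum>k\<in>K. b k) \<bullet> m) + n * (norm m)\<^sup>2"
    by (simp add: sum.distrib sum_subtractf sum_distrib_left inner_sum_left n_def)
  also have "\<dots> = (\<Sum>k\<in>K. (norm (b k))\<^sup>2) - n * (norm m)\<^sup>2"
    by (simp add: sm power2_norm_eq_inner)
  also have "\<dots> \<le> (\<Sum>k\<in>K. (norm (b k))\<^sup>2)" using n by simp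
  finally show ?thesis by (simp add: m_def n_def)
qed

lemma sum_upd:
  assumes "finite K" "k \<in> K"
  shows "(\<Sum>j\<in>K. h ((t(k := y)) j)) = (\<Sum>j\<in>K. h (t j)) - h (t k) + (h y :: real)"
proof -
  have "(\<Sum>j\<in>K. h ((t(k := y)) j)) = h y + (\<Sum>j\<in>K-{k}. h ((t(k := y)) j))"
    using assms by (simp add: sum.remove)
  also have "(\<Sum>j\<in>K-{k}. h ((t(k := y)) j)) = (\<Sum>j\<in>K-{k}. h (t j))"
    by (intro sum.cong) auto
  also have "\<dots> = (\<Sum>j\<in>K. h (t j)) - h (t k)"
    using assms by (simp add: sum_diff1)
  finally show ?thesis by simp
qed

lemma pointwise:
  fixes g :: "nat \<Rightarrow> 'a::euclidean_space \<Rightarrow> 'a" and x xs :: 'a and t :: "nat \<Rightarrow> 'a"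
  assumes N: "N \<ge> 1" and lam: "0 \<le> lam" "lam \<le> 1" and gm: "gm \<ge> 0" and be: "\<beta> \<ge> 0"
   and zero: "(\<Sum>k\<in>{1..N}. g k xs) = 0"
   and A3: "(\<Sum>k\<in>{1..N}. (norm (g k x - g k xs))\<^sup>2) \<le> real N * L * (norm (x - xs))\<^sup>2"
   and A5: "real N * \<mu> * (norm (x - xs))\<^sup>2 \<le> (x - xs) \<bullet> (\<Sum>k\<in>{1..N}. g k x)"
  shows "(\<Sum>k\<in>{1..N}. (norm (fst (sstep N g lam gm (x,t) k) - xs))\<^sup>2
            + \<beta> * (\<Sum>j\<in>{1..N}. (norm (snd (sstep N g lam gm (x,t) k) j - g j xs))\<^sup>2))
     \<le> real N * (1 - 2*gm*\<mu> + 3*L*gm\<^sup>2) * (norm (x - xs))\<^sup>2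
        + 3*gm\<^sup>2*(\<Sum>j\<in>{1..N}. (norm (t j - g j xs))\<^sup>2) + 3*gm\<^sup>2*(\<Sum>j\<in>{1..N}. (norm (g j xs))\<^sup>2)
       + \<beta> * ((real N - 1) * (\<Sum>j\<in>{1..N}. (norm (t j - g j xs))\<^sup>2) + real N * L * (norm (x - xs))\<^sup>2)"
proof -
  define K where "K = {1..N}"
  define n where "n = real N"
  have n: "n > 0" "card K = N" "finite K" "K \<noteq> {}" using N by (auto simp: K_def n_def)
  define e where "e = x - xs"
  define tb where "tb = (1/n) *\<^sub>R (\<Sum>j\<in>K. t j)"
  define v where "v k = g k x - lam *\<^sub>R (t k - tb)" for k
  define a where "a k = g k x - g k xs" for k
  define b where "b k = t k - g k xs" for k
  define s where "s k = g k xs" for k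
  define S where "S = (\<Sum>j\<in>K. (norm (b j))\<^sup>2)"
  define Ss where "Ss = (\<Sum>j\<in>K. (norm (s j))\<^sup>2)"
  have fst_eq: "fst (sstep N g lam gm (x,t) k) - xs = e - gm *\<^sub>R v k" for k
    by (simp add: sstep_def K_def n_def tb_def v_def e_def algebra_simps)
  have snd_eq: "snd (sstep N g lam gm (x,t) k) = t(k := g k x)" for k
    by (simp add: sstep_def)
  have E1: "(norm (e - gm *\<^sub>R v k))\<^sup>2 = (norm e)\<^sup>2 - 2*gm*(e \<bullet> v k) + gm\<^sup>2 * (norm (v k))\<^sup>2" for k
    unfolding power2_norm_eq_inner by (simp add: inner_diff_left inner_diff_right inner_commute power2_eq_square algebra_simps)
  have ntb: "n *\<^sub>R tb = (\<Sum>j\<in>K. t j)" using n by (simp add: tb_def)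
  have sumv: "(\<Sum>k\<in>K. v k) = (\<Sum>k\<in>K. g k x)"
  proof -
    have "(\<Sum>k\<in>K. v k) = (\<Sum>k\<in>K. g k x) - lam *\<^sub>R ((\<Sum>k\<in>K. t k) - n *\<^sub>R tb)"
      using n by (simp add: v_def sum_subtractf scaleR_sum_right[symmetric] n_def scaleR_right_diff_distrib sum_constant_scaleR)
    then show ?thesis using ntb by simp
  qed
  have isum: "(\<Sum>k\<in>K. e \<bullet> v k) = e \<bullet> (\<Sum>k\<in>K. g k x)"
    by (simp add: inner_sum_right[symmetric] sumv)
  have tbb: "tb = (1/real (card K)) *\<^sub>R (\<Sum>j\<in>K. b j)"
    using zero by (simp add: tb_def b_def sum_subtractf n K_def n_def)
  have vdec: "v k = a k + (- lam) *\<^sub>R (b k - tb) + (1 - lam) *\<^sub>R s k" for k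
    by (simp add: v_def a_def b_def s_def algebra_simps)
  have sc: "(norm (c *\<^sub>R w))\<^sup>2 \<le> (norm w)\<^sup>2" if "\<bar>c\<bar> \<le> 1" for c :: real and w :: 'a
  proof -
    have "(norm (c *\<^sub>R w))\<^sup>2 = c\<^sup>2 * (norm w)\<^sup>2" by (simp add: power_mult_distrib)
    also have "\<dots> \<le> 1 * (norm w)\<^sup>2"
      using that by (intro mult_right_mono) (auto simp: abs_le_square_iff[of c 1, simplified])
    finally show ?thesis by simp
  qed
  have nv: "(norm (v k))\<^sup>2 \<le> 3 * ((norm (a k))\<^sup>2 + (norm (b k - tb))\<^sup>2 + (norm (s k))\<^sup>2)" for k
  proof -
    have "(norm (v k))\<^sup>2 \<le> 3 * ((norm (a k))\<^sup>2 + (norm ((- lam) *\<^sub>R (b k - tb)))\<^sup>2 + (norm ((1 - lam) *\<^sub>R s k))\<^sup>2)"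
      unfolding vdec by (rule norm3_sq)
    also have "\<dots> \<le> 3 * ((norm (a k))\<^sup>2 + (norm (b k - tb))\<^sup>2 + (norm (s k))\<^sup>2)"
    proof -
      have "(norm ((- lam) *\<^sub>R (b k - tb)))\<^sup>2 \<le> (norm (b k - tb))\<^sup>2" by (rule sc) (use lam in auto)
      moreover have "(norm ((1 - lam) *\<^sub>R s k))\<^sup>2 \<le> (norm (s k))\<^sup>2" by (rule sc) (use lam in auto)
      ultimately show ?thesis by (intro mult_left_mono add_mono order_refl) auto
    qed
    finally show ?thesis .
  qed
  have var: "(\<Sum>k\<in>K. (norm (b k - tb))\<^sup>2) \<le> S"
    unfolding tbb S_def by (rule variance_le) (use n in auto)
  have A3': "(\<Sum>k\<in>K. (norm (a k))\<^sup>2) \<le> n * L * (norm e)\<^sup>2"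
    using A3 by (simp add: a_def K_def n_def e_def)
  have sumnv: "(\<Sum>k\<in>K. (norm (v k))\<^sup>2) \<le> 3 * (n * L * (norm e)\<^sup>2 + S + Ss)"
  proof -
    have "(\<Sum>k\<in>K. (norm (v k))\<^sup>2) \<le> (\<Sum>k\<in>K. 3 * ((norm (a k))\<^sup>2 + (norm (b k - tb))\<^sup>2 + (norm (s k))\<^sup>2))"
      by (intro sum_mono nv)
    also have "\<dots> = 3 * ((\<Sum>k\<in>K. (norm (a k))\<^sup>2) + (\<Sum>k\<in>K. (norm (b k - tb))\<^sup>2) + Ss)"
      by (simp add: sum.distrib sum_distrib_left Ss_def)
    also have "\<dots> \<le> 3 * (n * L * (norm e)\<^sup>2 + S + Ss)"
      using A3' var by simp
    finally show ?thesis .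
  qed
  have A5': "n * \<mu> * (norm e)\<^sup>2 \<le> e \<bullet> (\<Sum>k\<in>K. g k x)"
    using A5 by (simp add: K_def n_def e_def)
  have part1: "(\<Sum>k\<in>K. (norm (e - gm *\<^sub>R v k))\<^sup>2) \<le> n * (1 - 2*gm*\<mu> + 3*L*gm\<^sup>2)*(norm e)\<^sup>2 + 3*gm\<^sup>2*S + 3*gm\<^sup>2*Ss"
  proof -
    have "(\<Sum>k\<in>K. (norm (e - gm *\<^sub>R v k))\<^sup>2) = n * (norm e)\<^sup>2 - 2*gm*(\<Sum>k\<in>K. e \<bullet> v k) + gm\<^sup>2 * (\<Sum>k\<in>K. (norm (v k))\<^sup>2)"
      unfolding E1 by (simp add: sum.distrib sum_subtractf sum_distrib_left n n_def)
    also have "\<dots> \<le> n * (norm e)\<^sup>2 - 2*gm*(n * \<mu> * (norm e)\<^sup>2) + gm\<^sup>2 * (3 * (n * L * (norm e)\<^sup>2 + S + Ss))"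
      unfolding isum
      using A5' sumnv gm n(1) by (intro add_mono diff_mono mult_left_mono) auto
    also have "\<dots> = n * (1 - 2*gm*\<mu> + 3*L*gm\<^sup>2)*(norm e)\<^sup>2 + 3*gm\<^sup>2*S + 3*gm\<^sup>2*Ss"
      by (simp add: algebra_simps)
    finally show ?thesis .
  qed
  have part2: "(\<Sum>k\<in>K. \<Sum>j\<in>K. (norm ((t(k := g k x)) j - g j xs))\<^sup>2) \<le> (n - 1) * S + n * L * (norm e)\<^sup>2"
  proof -
    have "(\<Sum>k\<in>K. \<Sum>j\<in>K. (norm ((t(k := g k x)) j - g j xs))\<^sup>2) = (\<Sum>k\<in>K. S - (norm (b k))\<^sup>2 + (norm (a k))\<^sup>2)"
    proof (intro sum.cong refl)
      fix k assume k: "k \<in> K"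
      have "(\<Sum>j\<in>K. (norm ((t(k := g k x)) j - g j xs))\<^sup>2) = (\<Sum>j\<in>K. (norm (((\<lambda>j. t j - g j xs)(k := g k x - g k xs)) j))\<^sup>2)"
        by (intro sum.cong) auto
      also have "\<dots> = S - (norm (b k))\<^sup>2 + (norm (a k))\<^sup>2"
        using sum_upd[OF n(3) k, of "\<lambda>w. (norm w)\<^sup>2"] by (simp add: S_def b_def a_def)
      finally show "(\<Sum>j\<in>K. (norm ((t(k := g k x)) j - g j xs))\<^sup>2) = S - (norm (b k))\<^sup>2 + (norm (a k))\<^sup>2" .
    qed
    also have "\<dots> = n * S - S + (\<Sum>k\<in>K. (norm (a k))\<^sup>2)"
      by (simp add: sum.distrib sum_subtractf n n_def S_def[symmetric])
    also have "\<dots> \<le> (n - 1) * S + n * L * (norm e)\<^sup>2"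
      using A3' by (simp add: algebra_simps)
    finally show ?thesis .
  qed
  have "(\<Sum>k\<in>{1..N}. (norm (fst (sstep N g lam gm (x,t) k) - xs))\<^sup>2
            + \<beta> * (\<Sum>j\<in>{1..N}. (norm (snd (sstep N g lam gm (x,t) k) j - g j xs))\<^sup>2))
     = (\<Sum>k\<in>K. (norm (e - gm *\<^sub>R v k))\<^sup>2) + \<beta> * (\<Sum>k\<in>K. \<Sum>j\<in>K. (norm ((t(k := g k x)) j - g j xs))\<^sup>2)"
    unfolding fst_eq snd_eq K_def by (simp add: sum.distrib sum_distrib_left)
  also have "\<dots> \<le> n * (1 - 2*gm*\<mu> + 3*L*gm\<^sup>2)*(norm e)\<^sup>2 + 3*gm\<^sup>2*S + 3*gm\<^sup>2*Ss + \<beta> * ((n - 1) * S + n * L * (norm e)\<^sup>2)"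
    using part1 part2 be by (intro add_mono mult_left_mono) auto
  finally show ?thesis by (simp add: n_def e_def S_def Ss_def b_def s_def K_def)
qed

lemma (in prob_space) exp_indep:
  assumes iv: "indep_var S Y T V"
    and phi[measurable]: "\<phi> \<in> measurable T (count_space UNIV)"
    and dist: "distr M (count_space UNIV) (\<lambda>\<omega>. \<phi> (V \<omega>)) = measure_pmf (pmf_of_set K)"
    and K: "finite K" "K \<noteq> {}"
    and h[measurable]: "h \<in> borel_measurable (S \<Otimes>\<^sub>M count_space UNIV)"
  shows "(\<integral>\<^sup>+\<omega>. h (Y \<omega>, \<phi> (V \<omega>)) \<partial>M) = (\<integral>\<^sup>+\<omega>. (\<Sum>k\<in>K. h (Y \<omega>, k)) / of_nat (card K) \<partial>M)"
proof -
  have Ym[measurable]: "Y \<in> measurable M S" using indep_var_rv1[OF iv] .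
  have Vm[measurable]: "V \<in> measurable M T" using indep_var_rv2[OF iv] .
  have eq: "distr M S Y \<Otimes>\<^sub>M distr M T V = distr M (S \<Otimes>\<^sub>M T) (\<lambda>x. (Y x, V x))"
    using iv by (simp add: indep_var_distribution_eq)
  interpret PV: prob_space "distr M T V" by (rule prob_space_distr) simp
  have hk[measurable]: "(\<lambda>y. h (y, k)) \<in> borel_measurable S" for k
    by measurable
  have h'[measurable]: "(\<lambda>z. h (fst z, \<phi> (snd z))) \<in> borel_measurable (S \<Otimes>\<^sub>M T)"
    by measurable
  have "(\<integral>\<^sup>+\<omega>. h (Y \<omega>, \<phi> (V \<omega>)) \<partial>M) = (\<integral>\<^sup>+z. h (fst z, \<phi> (snd z)) \<partial>distr M (S \<Otimes>\<^sub>M T) (\<lambda>x. (Y x, V x)))"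
    by (subst nn_integral_distr) (auto intro: measurable_Pair)
  also have "\<dots> = (\<integral>\<^sup>+z. h (fst z, \<phi> (snd z)) \<partial>(distr M S Y \<Otimes>\<^sub>M distr M T V))"
    by (simp add: eq)
  also have "\<dots> = (\<integral>\<^sup>+y. \<integral>\<^sup>+v. h (y, \<phi> v) \<partial>distr M T V \<partial>distr M S Y)"
  proof (subst PV.nn_integral_fst[symmetric])
    show "(\<lambda>z. h (fst z, \<phi> (snd z))) \<in> borel_measurable (distr M S Y \<Otimes>\<^sub>M distr M T V)"
      using h' by (simp add: measurable_def space_pair_measure sets_pair_measure_cong[OF sets_distr sets_distr])
  qed simp
  also have "\<dots> = (\<integral>\<^sup>+y. (\<Sum>k\<in>K. h (y, k)) / of_nat (card K) \<partial>distr M S Y)"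
  proof (intro nn_integral_cong)
    fix y
    have hv: "(\<lambda>v. h (y, \<phi> v)) \<in> borel_measurable T"
      using measurable_compose[OF phi, of "\<lambda>k. h (y, k)" borel] by simp
    have "(\<integral>\<^sup>+v. h (y, \<phi> v) \<partial>distr M T V) = (\<integral>\<^sup>+\<omega>. h (y, \<phi> (V \<omega>)) \<partial>M)"
      using hv by (subst nn_integral_distr) auto
    also have "\<dots> = (\<integral>\<^sup>+k. h (y, k) \<partial>distr M (count_space UNIV) (\<lambda>\<omega>. \<phi> (V \<omega>)))"
      by (subst nn_integral_distr) auto
    also have "\<dots> = (\<Sum>k\<in>K. h (y, k)) / of_nat (card K)"
      unfolding dist using K by (simp add: nn_integral_pmf_of_set)
    finally show "(\<integral>\<^sup>+v. h (y, \<phi> v) \<partial>distr M T V) = (\<Sum>k\<in>K. h (y, k)) / of_nat (card K)" .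
  qed
  also have "\<dots> = (\<integral>\<^sup>+\<omega>. (\<Sum>k\<in>K. h (Y \<omega>, k)) / of_nat (card K) \<partial>M)"
    by (subst nn_integral_distr) (auto simp: hk)
  finally show ?thesis .
qed

lemma (in prob_space) indep_Z:
  fixes X0 X1 :: "'a \<Rightarrow> 'b::euclidean_space" and U :: "nat \<Rightarrow> 'a \<Rightarrow> nat"
  assumes Xm: "(\<lambda>\<omega>. (X0 \<omega>, X1 \<omega>)) \<in> borel_measurable M"
    and Um: "\<And>j. j \<ge> 2 \<Longrightarrow> U j \<in> measurable M (count_space UNIV)"
    and U_indep: "indep_vars (\<lambda>_. count_space UNIV) U {2..}"
    and X_U_indep: "indep_set
        {(\<lambda>\<omega>. (X0 \<omega>, X1 \<omega>)) -` A \<inter> space M | A. A \<in> sets borel}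
        (sigma_sets (space M) (\<Union>j\<in>{2..}. {U j -` A \<inter> space M | A. A \<in> sets (count_space UNIV)}))"
  shows "indep_vars (\<lambda>_. (borel :: ('b \<times> 'b) measure) \<Otimes>\<^sub>M count_space UNIV)
     (\<lambda>i \<omega>. if i = 0 then ((X0 \<omega>, X1 \<omega>), 0) else ((0, 0), U i \<omega>)) (insert 0 {2..})"
proof -
  define F where "F i = (if i = 0 then {(\<lambda>\<omega>. (X0 \<omega>, X1 \<omega>)) -` A \<inter> space M | A. A \<in> sets borel}
     else {U i -` A \<inter> space M | A. A \<in> sets (count_space UNIV)})" for i :: nat
  define G where "G = sigma_sets (space M) (\<Union>j\<in>{2..}. {U j -` A \<inter> space M | A. A \<in> sets (count_space UNIV)})"
  have UI: "indep_sets (\<lambda>i. {U i -` A \<inter> space M | A. A \<in> sets (count_space UNIV)}) {2..}"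
    using U_indep unfolding indep_vars_def2 by simp
  have UIJ: "prob (\<Inter>j\<in>J. A j) = (\<Prod>j\<in>J. prob (A j))"
    if "J \<noteq> {}" "J \<subseteq> {2..}" "finite J" "\<forall>j\<in>J. A j \<in> F j" for J A
  proof (rule indep_setsD[OF UI that(2,1,3)])
    show "\<forall>j\<in>J. A j \<in> {U j -` A \<inter> space M |A. A \<in> sets (count_space UNIV)}"
    proof
      fix j assume "j \<in> J"
      then have "j \<noteq> 0" "A j \<in> F j" using that by auto
      then show "A j \<in> {U j -` A \<inter> space M |A. A \<in> sets (count_space UNIV)}" by (simp add: F_def)
    qed
  qed
  have FI: "indep_sets F (insert 0 {2..})"
  proof (rule indep_setsI)
    fix i :: nat assume "i \<in> insert 0 {2..}"
    then show "F i \<subseteq> events"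
      using Xm Um by (auto simp: F_def intro!: measurable_sets)
  next
    fix A J assume J: "J \<noteq> {}" "J \<subseteq> insert (0::nat) {2..}" "finite J" and A: "\<forall>j\<in>J. A j \<in> F j"
    show "prob (\<Inter>j\<in>J. A j) = (\<Prod>j\<in>J. prob (A j))"
    proof (cases "0 \<in> J")
      case False
      then show ?thesis using J A by (intro UIJ) auto
    next
      case True
      define J' where "J' = J - {0}"
      have J': "J' \<subseteq> {2..}" "finite J'" using J by (auto simp: J'_def)
      show ?thesis
      proof (cases "J' = {}")
        case True
        then have "J = {0}" using \<open>0 \<in> J\<close> by (auto simp: J'_def)
        then show ?thesis by simp
      next
        case False
        have inG: "(\<Inter>j\<in>J'. A j) \<in> G"
        proof -
          interpret sigma_algebra "space M" G
            unfolding G_def by (rule sigma_algebra_sigma_sets) (use Um in \<open>auto dest: measurable_space\<close>)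
          have "\<And>B. (\<And>i. i \<in> J' \<Longrightarrow> B i \<in> G) \<Longrightarrow> \<Inter>(B ` J') \<in> G"
            using J'(2) False by (rule finite_INT) blast
          moreover have "A i \<in> G" if "i \<in> J'" for i
          proof -
            have "A i \<in> F i" using A that by (auto simp: J'_def)
            then show ?thesis using that J' unfolding G_def F_def
              by (intro sigma_sets.Basic) (auto simp: J'_def)
          qed
          ultimately show ?thesis by blast
        qed
        have A0: "A 0 \<in> {(\<lambda>\<omega>. (X0 \<omega>, X1 \<omega>)) -` A \<inter> space M | A. A \<in> sets borel}"
          using A True by (auto simp: F_def)
        have "(\<Inter>j\<in>J. A j) = A 0 \<inter> (\<Inter>j\<in>J'. A j)"
          using True by (auto simp: J'_def)
        then have "prob (\<Inter>j\<in>J. A j) = prob (A 0) * prob (\<Inter>j\<in>J'. A j)"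
          using indep_setD[OF X_U_indep A0 inG[unfolded G_def]] by simp
        also have "prob (\<Inter>j\<in>J'. A j) = (\<Prod>j\<in>J'. prob (A j))"
          using False J' A by (intro UIJ) (auto simp: J'_def)
        also have "prob (A 0) * (\<Prod>j\<in>J'. prob (A j)) = (\<Prod>j\<in>J. prob (A j))"
          using True J(3) by (simp add: J'_def prod.remove)
        finally show ?thesis .
      qed
    qed
  qed
  show ?thesis
    unfolding indep_vars_def2
  proof (intro conjI ballI)
    fix i :: nat assume i: "i \<in> insert 0 {2..}"
    show "random_variable (borel \<Otimes>\<^sub>M count_space UNIV) (\<lambda>\<omega>. if i = 0 then ((X0 \<omega>, X1 \<omega>), 0) else ((0, 0), U i \<omega>))"
    proof (cases "i = 0")
      case True then show ?thesis using Xm by simp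
    next
      case False then have "i \<ge> 2" using i by auto
      then show ?thesis using False Um[of i] by simp
    qed
  next
    show "indep_sets (\<lambda>i. {(\<lambda>\<omega>. if i = 0 then ((X0 \<omega>, X1 \<omega>), 0) else ((0, 0), U i \<omega>)) -` A \<inter> space M |A.
         A \<in> sets ((borel :: ('b \<times> 'b) measure) \<Otimes>\<^sub>M count_space (UNIV::nat set))}) (insert 0 {2..})"
    proof (rule indep_sets_mono_sets[OF FI])
      fix i :: nat assume i: "i \<in> insert 0 {2..}"
      show "{(\<lambda>\<omega>. if i = 0 then ((X0 \<omega>, X1 \<omega>), 0) else ((0, 0), U i \<omega>)) -` A \<inter> space M |A.
         A \<in> sets ((borel :: ('b \<times> 'b) measure) \<Otimes>\<^sub>M count_space (UNIV::nat set))} \<subseteq> F i"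
      proof (cases "i = 0")
        case True
        show ?thesis
        proof safe
          fix A assume A: "A \<in> sets ((borel :: ('b \<times> 'b) measure) \<Otimes>\<^sub>M count_space (UNIV::nat set))"
          have pm: "(\<lambda>p::'b\<times>'b. (p, 0::nat)) \<in> measurable borel (borel \<Otimes>\<^sub>M count_space UNIV)"
            by measurable
          have "(\<lambda>p::'b\<times>'b. (p, 0::nat)) -` A \<inter> space borel \<in> sets borel"
            using measurable_sets[OF pm A] .
          moreover have "(\<lambda>\<omega>. if i = 0 then ((X0 \<omega>, X1 \<omega>), 0) else ((0, 0), U i \<omega>)) -` A \<inter> space M
             = (\<lambda>\<omega>. (X0 \<omega>, X1 \<omega>)) -` ((\<lambda>p::'b\<times>'b. (p, 0::nat)) -` A \<inter> space borel) \<inter> space M"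
            using True by auto
          ultimately show "(\<lambda>\<omega>. if i = 0 then ((X0 \<omega>, X1 \<omega>), 0) else ((0, 0), U i \<omega>)) -` A \<inter> space M \<in> F i"
            using True unfolding F_def by auto
        qed
      next
        case False
        show ?thesis
        proof safe
          fix A assume A: "A \<in> sets ((borel :: ('b \<times> 'b) measure) \<Otimes>\<^sub>M count_space (UNIV::nat set))"
          have eq: "(\<lambda>\<omega>. if i = 0 then ((X0 \<omega>, X1 \<omega>), 0) else ((0, 0), U i \<omega>)) -` A \<inter> space M
             = U i -` {n. ((0::'b, 0::'b), n) \<in> A} \<inter> space M"
            using False by auto
          have mem: "U i -` {n. ((0::'b, 0::'b), n) \<in> A} \<inter> space M \<in> {U i -` A \<inter> space M |A. A \<in> sets (count_space UNIV)}"
            by (rule CollectI, rule exI[of _ "{n. ((0::'b, 0::'b), n) \<in> A}"]) simp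
          show "(\<lambda>\<omega>. if i = 0 then ((X0 \<omega>, X1 \<omega>), 0) else ((0, 0), U i \<omega>)) -` A \<inter> space M \<in> F i"
            unfolding eq F_def using mem False by simp
        qed
      qed
    qed
  qed
qed

lemma avg_bound:
  fixes g :: "nat \<Rightarrow> 'a::euclidean_space \<Rightarrow> 'a" and x xs :: 'a and t :: "nat \<Rightarrow> 'a"
  assumes N: "N \<ge> 1" and lam: "0 \<le> lam" "lam \<le> 1" and gm: "gm \<ge> 0" and L: "L \<ge> 0"
   and zero: "(\<Sum>k\<in>{1..N}. g k xs) = 0"
   and A3: "(\<Sum>k\<in>{1..N}. (norm (g k x - g k xs))\<^sup>2) \<le> real N * L * (norm (x - xs))\<^sup>2"
   and A5: "real N * \<mu> * (norm (x - xs))\<^sup>2 \<le> (x - xs) \<bullet> (\<Sum>k\<in>{1..N}. g k x)"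
  shows "(\<Sum>k\<in>{1..N}. ennreal ((norm (fst (sstep N g lam gm (x,t) k) - xs))\<^sup>2
            + 6 * gm\<^sup>2 * (\<Sum>j\<in>{1..N}. (norm (snd (sstep N g lam gm (x,t) k) j - g j xs))\<^sup>2))) / of_nat (card {1..N})
    \<le> ennreal (max (1 - 2*gm*\<mu> + 9*L*gm\<^sup>2) (1 - 1/(2*real N)) * ((norm (x - xs))\<^sup>2 + 6*gm\<^sup>2*(\<Sum>j\<in>{1..N}. (norm (t j - g j xs))\<^sup>2))
       + (3 * (\<Sum>j\<in>{1..N}. (norm (g j xs))\<^sup>2) / real N) * gm\<^sup>2)"
proof -
  define E where "E = (norm (x - xs))\<^sup>2"
  define S where "S = (\<Sum>j\<in>{1..N}. (norm (t j - g j xs))\<^sup>2)"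
  define Ss where "Ss = (\<Sum>j\<in>{1..N}. (norm (g j xs))\<^sup>2)"
  define F where "F k = (norm (fst (sstep N g lam gm (x,t) k) - xs))\<^sup>2
            + 6 * gm\<^sup>2 * (\<Sum>j\<in>{1..N}. (norm (snd (sstep N g lam gm (x,t) k) j - g j xs))\<^sup>2)" for k
  define \<rho> where "\<rho> = 1 - 2*gm*\<mu> + 9*L*gm\<^sup>2"
  define q where "q = max \<rho> (1 - 1/(2*real N))"
  have n: "real N > 0" using N by simp
  have E0: "E \<ge> 0" and S0: "S \<ge> 0" and Ss0: "Ss \<ge> 0" by (auto simp: E_def S_def Ss_def intro!: sum_nonneg)
  have F0: "F k \<ge> 0" for k by (auto simp: F_def intro!: add_nonneg_nonneg mult_nonneg_nonneg sum_nonneg)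
  have pw: "(\<Sum>k\<in>{1..N}. F k) \<le> real N * (1 - 2*gm*\<mu> + 3*L*gm\<^sup>2) * E + 3*gm\<^sup>2*S + 3*gm\<^sup>2*Ss
       + 6 * gm\<^sup>2 * ((real N - 1) * S + real N * L * E)"
    unfolding F_def E_def S_def Ss_def
    by (rule pointwise[OF N lam gm _ zero A3 A5]) simp
  have rq: "\<rho> \<le> q" and rq2: "1 - 1/(2*real N) \<le> q" by (auto simp: q_def)
  have "real N * (1 - 2*gm*\<mu> + 3*L*gm\<^sup>2) * E + 3*gm\<^sup>2*S + 3*gm\<^sup>2*Ss
       + 6 * gm\<^sup>2 * ((real N - 1) * S + real N * L * E)
      = real N * \<rho> * E + real N * (1 - 1/(2*real N)) * (6 * gm\<^sup>2 * S) + 3*gm\<^sup>2*Ss"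
    using n by (simp add: \<rho>_def field_simps)
  also have "\<dots> \<le> real N * q * E + real N * q * (6 * gm\<^sup>2 * S) + 3*gm\<^sup>2*Ss"
    using rq rq2 n E0 S0 gm
    by (intro add_mono mult_right_mono mult_left_mono order_refl) auto
  also have "\<dots> = real N * (q * (E + 6 * gm\<^sup>2 * S) + 3 * Ss / real N * gm\<^sup>2)"
    using n by (simp add: field_simps)
  finally have main: "(\<Sum>k\<in>{1..N}. F k) / real N \<le> q * (E + 6 * gm\<^sup>2 * S) + 3 * Ss / real N * gm\<^sup>2"
    using pw n by (simp add: divide_le_eq mult.commute)
  have "(\<Sum>k\<in>{1..N}. ennreal (F k)) / of_nat (card {1..N}) = ennreal ((\<Sum>k\<in>{1..N}. F k) / real N)"
    using F0 n by (simp add: ennreal_of_nat_eq_real_of_nat divide_ennreal sum_nonneg)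
  also have "\<dots> \<le> ennreal (q * (E + 6 * gm\<^sup>2 * S) + 3 * Ss / real N * gm\<^sup>2)"
    by (rule ennreal_leI[OF main])
  finally show ?thesis by (simp add: F_def q_def \<rho>_def E_def S_def Ss_def)
qed



lemma gamma_diff:
  assumes n: "n \<ge> 1" and a: "0 \<le> \<alpha>" "\<alpha> \<le> 1" and c: "c > 0"
  shows "c / real n powr \<alpha> - c / real (Suc n) powr \<alpha> \<le> (c / real n powr \<alpha>) / real n"
proof -
  have n0: "real n > 0" using n by simp
  have "real n powr (1 - \<alpha>) \<le> real (Suc n) powr (1 - \<alpha>)"
    using a by (intro powr_mono2) auto
  then have "real n powr (1 - \<alpha>) * (real n powr \<alpha> * real (Suc n) powr \<alpha>)
      \<le> real (Suc n) powr (1 - \<alpha>) * (real n powr \<alpha> * real (Suc n) powr \<alpha>)"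
    by (intro mult_right_mono) auto
  moreover have e1: "real n powr (1 - \<alpha>) * real n powr \<alpha> = real n"
    using n0 by (simp add: powr_add[symmetric])
  moreover have e2: "real (Suc n) powr (1 - \<alpha>) * real (Suc n) powr \<alpha> = real (Suc n)"
    by (simp add: powr_add[symmetric] del: of_nat_Suc)
  ultimately have key: "real n * real (Suc n) powr \<alpha> \<le> real (Suc n) * real n powr \<alpha>"
    by (metis (no_types, lifting) mult.assoc mult.commute)
  have p1: "real n powr \<alpha> > 0" "real (Suc n) powr \<alpha> > 0" using n0 by auto
  have "c / real (Suc n) powr \<alpha> \<ge> c / real n powr \<alpha> * (real n / real (Suc n))"
  proof -
    have k2: "(c * real n) * real (Suc n) powr \<alpha> \<le> c * (real (Suc n) * real n powr \<alpha>)"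
      using key c by (simp add: mult.assoc mult_left_mono del: of_nat_Suc)
    have "c / real n powr \<alpha> * (real n / real (Suc n)) = (c * real n) / (real n powr \<alpha> * real (Suc n))"
      by simp
    also have "\<dots> \<le> c / real (Suc n) powr \<alpha>"
      using k2 p1 by (subst divide_le_eq) (auto simp: field_simps simp del: of_nat_Suc)
    finally show ?thesis .
  qed
  moreover have "c / real n powr \<alpha> * (real n / real (Suc n)) \<ge> c / real n powr \<alpha> * (1 - 1 / real n)"
    using n0 p1 c by (intro mult_left_mono) (auto simp: field_simps)
  ultimately have "c / real (Suc n) powr \<alpha> \<ge> c / real n powr \<alpha> * (1 - 1 / real n)" by linarith
  moreover have "c / real n powr \<alpha> * (1 - 1 / real n) = c / real n powr \<alpha> - (c / real n powr \<alpha>) / real n"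
    by (simp add: right_diff_distrib)
  ultimately show ?thesis by linarith
qed

lemma eventually_kappa:
  assumes c: "c > 0" and a: "0 < \<alpha>" "\<alpha> \<le> 1" and mu: "\<mu> > 0"
    and a1: "\<alpha> = 1 \<Longrightarrow> 2 * c * \<mu> > 1"
  shows "\<exists>\<kappa>>0. eventually (\<lambda>n. real n powr (\<alpha> - 1) / c + 9 * L * (c / real n powr \<alpha>) \<le> 2 * \<mu> - \<kappa>) sequentially"
proof -
  define l where "l = (if \<alpha> = 1 then 1 / c else 0)"
  have l: "l < 2 * \<mu>" using a1 c mu by (auto simp: l_def field_simps)
  have t1: "(\<lambda>n. real n powr (\<alpha> - 1) / c) \<longlonglongrightarrow> l"
  proof (cases "\<alpha> = 1")
    case True
    have "eventually (\<lambda>n. real n powr (\<alpha> - 1) / c = 1 / c) sequentially"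
      using eventually_gt_at_top[of "0::nat"] by eventually_elim (simp add: True)
    then show ?thesis unfolding l_def using True by (simp add: tendsto_eventually)
  next
    case False
    then have "\<alpha> - 1 < 0" using a by simp
    then have "(\<lambda>n. real n powr (\<alpha> - 1)) \<longlonglongrightarrow> 0"
      by (intro tendsto_neg_powr filterlim_real_sequentially)
    then show ?thesis unfolding l_def using False tendsto_divide_zero by auto
  qed
  have t2: "(\<lambda>n. c / real n powr \<alpha>) \<longlonglongrightarrow> 0"
  proof -
    have "(\<lambda>n. real n powr (- \<alpha>)) \<longlonglongrightarrow> 0"
      using a by (intro tendsto_neg_powr filterlim_real_sequentially) auto
    then have "(\<lambda>n. c * real n powr (- \<alpha>)) \<longlonglongrightarrow> c * 0" by (intro tendsto_mult tendsto_const)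
    then show ?thesis by (simp add: powr_minus divide_inverse)
  qed
  have "(\<lambda>n. real n powr (\<alpha> - 1) / c + 9 * L * (c / real n powr \<alpha>)) \<longlonglongrightarrow> l + 9 * L * 0"
    by (intro tendsto_add tendsto_mult t1 t2 tendsto_const)
  then have "eventually (\<lambda>n. real n powr (\<alpha> - 1) / c + 9 * L * (c / real n powr \<alpha>) < (l + 2 * \<mu>) / 2) sequentially"
    using l by (intro order_tendstoD) auto
  then have "eventually (\<lambda>n. real n powr (\<alpha> - 1) / c + 9 * L * (c / real n powr \<alpha>) \<le> 2 * \<mu> - (2 * \<mu> - l) / 2) sequentially"
    by eventually_elim (simp add: field_simps)
  then show ?thesis using l by (intro exI[of _ "(2 * \<mu> - l) / 2"]) auto
qed

lemma gamma_tendsto: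
  assumes a: "0 < \<alpha>"
  shows "(\<lambda>n. c / real n powr \<alpha>) \<longlonglongrightarrow> 0"
proof -
  have "(\<lambda>n. real n powr (- \<alpha>)) \<longlonglongrightarrow> 0"
    using a by (intro tendsto_neg_powr filterlim_real_sequentially) auto
  then have "(\<lambda>n. c * real n powr (- \<alpha>)) \<longlonglongrightarrow> c * 0" by (intro tendsto_mult tendsto_const)
  then show ?thesis by (simp add: powr_minus divide_inverse)
qed

lemma rate:
  fixes w :: "nat \<Rightarrow> ennreal"
  assumes c: "c > 0" and a: "0 < \<alpha>" "\<alpha> \<le> 1" and mu: "\<mu> > 0" and L: "L \<ge> 0"
    and a1: "\<alpha> = 1 \<Longrightarrow> 2 * c * \<mu> > 1"
    and r: "0 \<le> r" "r < 1" and S0: "S0 \<ge> 0"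
    and w1: "w 1 < \<infinity>"
    and rec: "\<And>n. n \<ge> 1 \<Longrightarrow> w (Suc n) \<le>
       ennreal (max (1 - 2 * (c / real n powr \<alpha>) * \<mu> + 9 * L * (c / real n powr \<alpha>)\<^sup>2) r) * w n
         + ennreal (S0 * (c / real n powr \<alpha>)\<^sup>2)"
  shows "\<exists>K>0. \<forall>n\<ge>1. w n \<le> ennreal (K / real n powr \<alpha>)"
proof -
  define \<gamma> where "\<gamma> n = c / real n powr \<alpha>" for n
  define q where "q n = max (1 - 2 * \<gamma> n * \<mu> + 9 * L * (\<gamma> n)\<^sup>2) r" for n
  have q0: "q n \<ge> 0" for n using r by (simp add: q_def)
  have g0: "\<gamma> n > 0" if "n \<ge> 1" for n using that c by (simp add: \<gamma>_def)
  have rec': "w (Suc n) \<le> ennreal (q n) * w n + ennreal (S0 * (\<gamma> n)\<^sup>2)" if "n \<ge> 1" for n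
    using rec[OF that] by (simp add: q_def \<gamma>_def)
  have fin: "w n < \<infinity>" if "n \<ge> 1" for n
    using that
  proof (induction n rule: dec_induct)
    case base then show ?case using w1 by simp
  next
    case (step n)
    have "ennreal (q n) * w n + ennreal (S0 * (\<gamma> n)\<^sup>2) < \<infinity>"
      using step.IH by (simp add: ennreal_mult_less_top)
    then show ?case using rec'[of n] step.hyps by (meson le_less_trans order.trans order_le_less_trans)
  qed
  define v where "v n = enn2real (w n)" for n
  have wv: "w n = ennreal (v n)" if "n \<ge> 1" for n
    using fin[OF that] by (simp add: v_def ennreal_enn2real_if less_top)
  have v0: "v n \<ge> 0" for n by (simp add: v_def)
  have vrec: "v (Suc n) \<le> q n * v n + S0 * (\<gamma> n)\<^sup>2" if "n \<ge> 1" for n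
  proof -
    have "ennreal (v (Suc n)) \<le> ennreal (q n) * ennreal (v n) + ennreal (S0 * (\<gamma> n)\<^sup>2)"
      using rec'[OF that] wv[OF that] wv[of "Suc n"] that by simp
    also have "\<dots> = ennreal (q n * v n + S0 * (\<gamma> n)\<^sup>2)"
      using q0 v0 S0 by (simp add: ennreal_mult ennreal_plus)
    finally show ?thesis
      using q0[of n] v0[of n] S0 by (subst (asm) ennreal_le_iff) (auto intro!: add_nonneg_nonneg mult_nonneg_nonneg)
  qed
  obtain \<kappa> where kap: "\<kappa> > 0" and evk: "eventually (\<lambda>n. real n powr (\<alpha> - 1) / c + 9 * L * (c / real n powr \<alpha>) \<le> 2 * \<mu> - \<kappa>) sequentially"
    using eventually_kappa[OF c a mu a1] by blast
  have evr: "eventually (\<lambda>n. 2 * \<mu> * (c / real n powr \<alpha>) < 1 - r) sequentially"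
  proof -
    have "(\<lambda>n. 2 * \<mu> * (c / real n powr \<alpha>)) \<longlonglongrightarrow> 2 * \<mu> * 0"
      by (intro tendsto_mult tendsto_const gamma_tendsto a)
    then show ?thesis using r by (intro order_tendstoD) auto
  qed
  obtain N0 where N0: "\<And>n. n \<ge> N0 \<Longrightarrow> (real n powr (\<alpha> - 1) / c + 9 * L * (c / real n powr \<alpha>) \<le> 2 * \<mu> - \<kappa>)
      \<and> 2 * \<mu> * (c / real n powr \<alpha>) < 1 - r"
    using eventually_conj[OF evk evr] unfolding eventually_sequentially by blast
  define n1 where "n1 = max N0 1"
  have step: "\<gamma> (Suc n) - q n * \<gamma> n \<ge> \<kappa> * (\<gamma> n)\<^sup>2" if n: "n \<ge> n1" for n
  proof -
    have n1': "n \<ge> 1" "n \<ge> N0" using n by (auto simp: n1_def)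
    have n0: "real n > 0" using n1' by simp
    note P = N0[OF n1'(2), folded \<gamma>_def]
    have qe: "q n = 1 - 2 * \<gamma> n * \<mu> + 9 * L * (\<gamma> n)\<^sup>2"
    proof -
      have h9: "0 \<le> 9 * L * (\<gamma> n)\<^sup>2" using L by simp
      have "2 * \<gamma> n * \<mu> < 1 - r" using P by (simp add: mult.commute mult.left_commute)
      then have "r \<le> 1 - 2 * \<gamma> n * \<mu> + 9 * L * (\<gamma> n)\<^sup>2" using h9 by linarith
      then show ?thesis by (simp add: q_def)
    qed
    have gd: "\<gamma> n - \<gamma> (Suc n) \<le> \<gamma> n / real n"
      unfolding \<gamma>_def using gamma_diff[OF n1'(1) _ a(2) c] a by simp
    have pw: "real n powr (\<alpha> - 1) * real n = real n powr \<alpha>"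
      using powr_mult_base[OF less_imp_le[OF n0], of "\<alpha> - 1"] by (simp add: mult.commute)
    have gn: "\<gamma> n / real n = (\<gamma> n)\<^sup>2 * (real n powr (\<alpha> - 1) / c)"
    proof -
      have pp: "real n powr \<alpha> > 0" using n0 by simp
      have "(\<gamma> n)\<^sup>2 * (real n powr (\<alpha> - 1) / c) = c * (real n powr (\<alpha> - 1)) / (real n powr \<alpha>)\<^sup>2"
        using c by (simp add: \<gamma>_def power2_eq_square field_simps)
      also have "\<dots> = c * (real n powr (\<alpha> - 1) * real n) / ((real n powr \<alpha>)\<^sup>2 * real n)"
        using n0 by simp
      also have "\<dots> = c / (real n powr \<alpha> * real n)"
        unfolding pw using pp by (simp add: power2_eq_square)
      also have "\<dots> = \<gamma> n / real n" by (simp add: \<gamma>_def)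
      finally show ?thesis by simp
    qed
    have "\<gamma> (Suc n) - q n * \<gamma> n \<ge> (\<gamma> n)\<^sup>2 * (2 * \<mu> - 9 * L * \<gamma> n - real n powr (\<alpha> - 1) / c)"
      using gd unfolding qe gn by (simp add: algebra_simps power2_eq_square power3_eq_cube)
    moreover have "(\<gamma> n)\<^sup>2 * (2 * \<mu> - 9 * L * \<gamma> n - real n powr (\<alpha> - 1) / c) \<ge> (\<gamma> n)\<^sup>2 * \<kappa>"
      using P by (intro mult_left_mono) auto
    ultimately show ?thesis by (simp add: mult.commute)
  qed
  define K0 where "K0 = max (S0 / \<kappa>) (Max ((\<lambda>n. v n / \<gamma> n) ` {1..n1}))"
  have K0: "K0 \<ge> 0" unfolding K0_def using S0 kap by (intro max.coboundedI1) simp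
  have bound: "v n \<le> K0 * \<gamma> n" if "n \<ge> 1" for n
    using that
  proof (induction n)
    case 0 then show ?case by simp
  next
    case (Suc n)
    show ?case
    proof (cases "Suc n \<le> n1")
      case True
      have "v (Suc n) / \<gamma> (Suc n) \<le> Max ((\<lambda>n. v n / \<gamma> n) ` {1..n1})"
        using True by (intro Max_ge) auto
      then have "v (Suc n) / \<gamma> (Suc n) \<le> K0" by (simp add: K0_def)
      then show ?thesis using g0[of "Suc n"] by (simp add: divide_le_eq)
    next
      case False
      then have n: "n \<ge> n1" "n \<ge> 1" by (auto simp: n1_def)
      have "v (Suc n) \<le> q n * v n + S0 * (\<gamma> n)\<^sup>2" by (rule vrec[OF n(2)])
      also have "\<dots> \<le> q n * (K0 * \<gamma> n) + S0 * (\<gamma> n)\<^sup>2"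
        using Suc.IH[OF n(2)] q0 S0 by (intro add_mono mult_left_mono) auto
      also have "\<dots> \<le> K0 * \<gamma> (Suc n)"
      proof -
        have "S0 / \<kappa> \<le> K0" unfolding K0_def by simp
        then have "S0 \<le> K0 * \<kappa>" using kap by (simp add: divide_le_eq)
        then have "S0 * (\<gamma> n)\<^sup>2 \<le> K0 * (\<kappa> * (\<gamma> n)\<^sup>2)" by (simp add: mult_right_mono mult.assoc[symmetric])
        also have "\<dots> \<le> K0 * (\<gamma> (Suc n) - q n * \<gamma> n)"
          using step[OF n(1)] K0 by (intro mult_left_mono) auto
        finally show ?thesis by (simp add: algebra_simps)
      qed
      finally show ?thesis .
    qed
  qed
  show ?thesis
  proof (intro exI[of _ "(K0 + 1) * c"] conjI allI impI)
    show "(K0 + 1) * c > 0" using K0 c by simp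
    fix n :: nat assume n: "n \<ge> 1"
    have "w n = ennreal (v n)" by (rule wv[OF n])
    also have "\<dots> \<le> ennreal ((K0 + 1) * c / real n powr \<alpha>)"
    proof (rule ennreal_leI)
      have "v n \<le> K0 * \<gamma> n" by (rule bound[OF n])
      also have "\<dots> \<le> (K0 + 1) * \<gamma> n" using g0[OF n] by simp
      finally show "v n \<le> (K0 + 1) * c / real n powr \<alpha>" by (simp add: \<gamma>_def)
    qed
    finally show "w n \<le> ennreal ((K0 + 1) * c / real n powr \<alpha>)" .
  qed
qed



theorem theorem3:
  fixes M :: "'s measure"
    and N :: nat
    and fk :: "nat \<Rightarrow> 'a::euclidean_space \<Rightarrow> real"
    and g :: "nat \<Rightarrow> 'a \<Rightarrow> 'a"
    and lam c \<alpha> L \<mu> :: real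
    and xstar :: 'a
    and X0 X1 :: "'s \<Rightarrow> 'a"
    and U :: "nat \<Rightarrow> 's \<Rightarrow> nat"
  assumes N: "N \<ge> 1"
    and grad: "\<And>k x. k \<in> {1..N} \<Longrightarrow> (fk k has_derivative (\<lambda>h. g k x \<bullet> h)) (at x)"
    and lam: "0 \<le> lam" "lam \<le> 1"
    and c: "c > 0"
    and alpha: "1/2 < \<alpha>" "\<alpha> \<le> 1"
    and P: "prob_space M"
    and X0: "X0 \<in> borel_measurable M" "integrable M (\<lambda>\<omega>. (norm (X0 \<omega>))\<^sup>2)"
    and X1: "X1 \<in> borel_measurable M" "integrable M (\<lambda>\<omega>. (norm (X1 \<omega>))\<^sup>2)"
    and U_meas: "\<And>j. j \<ge> 2 \<Longrightarrow> U j \<in> measurable M (count_space UNIV)"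
    and U_unif: "\<And>j. j \<ge> 2 \<Longrightarrow>
        distr M (count_space UNIV) (U j) = measure_pmf (pmf_of_set {1..N})"
    and U_indep: "prob_space.indep_vars M (\<lambda>_. count_space UNIV) U {2..}"
    and X_U_indep: "prob_space.indep_set M
        {(\<lambda>\<omega>. (X0 \<omega>, X1 \<omega>)) -` A \<inter> space M | A. A \<in> sets borel}
        (sigma_sets (space M) (\<Union>j\<in>{2..}. {U j -` A \<inter> space M | A. A \<in> sets (count_space UNIV)}))"
    and A1_cont: "continuous_on UNIV (\<lambda>x. (1 / real N) *\<^sub>R (\<Sum>k\<in>{1..N}. g k x))"
    and A1_zero: "(1 / real N) *\<^sub>R (\<Sum>k\<in>{1..N}. g k xstar) = 0"
    and A1_unique: "\<And>x. (1 / real N) *\<^sub>R (\<Sum>k\<in>{1..N}. g k x) = 0 \<Longrightarrow> x = xstar"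
    and A3: "L > 0" "\<And>x. (1 / real N) * (\<Sum>k\<in>{1..N}. (norm (g k x - g k xstar))\<^sup>2)
                          \<le> L * (norm (x - xstar))\<^sup>2"
    and A5: "\<mu> > 0" "\<And>x. (x - xstar) \<bullet> ((1 / real N) *\<^sub>R (\<Sum>k\<in>{1..N}. g k x))
                          \<ge> \<mu> * (norm (x - xstar))\<^sup>2"
    and step1: "2 * c * \<mu> \<le> 2 powr \<alpha>"
    and step2: "\<alpha> = 1 \<Longrightarrow> 2 * c * \<mu> > 1"
  shows "\<exists>K>0. \<forall>n\<ge>1.
    (\<integral>\<^sup>+ \<omega>. ennreal ((norm (saga_X N g lam (\<lambda>n. c / real n powr \<alpha>) (X0 \<omega>) (X1 \<omega>)
                                  (\<lambda>j. U j \<omega>) n - xstar))\<^sup>2) \<partial>M)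
      \<le> ennreal (K / real n powr \<alpha>)"
proof -
  interpret prob_space M by (rule P)
  define gam where "gam = (\<lambda>n::nat. c / real n powr \<alpha>)"
  define U' where "U' j \<omega> = (if 2 \<le> j then cl N (U j \<omega>) else 1)" for j \<omega>
  define ST where "ST m \<omega> = saga_st N g lam gam (X0 \<omega>) (X1 \<omega>) (\<lambda>j. U' j \<omega>) m" for m \<omega>
  define Ssum where "Ssum t = (\<Sum>j\<in>{1..N}. (norm (t j - g j xstar))\<^sup>2)" for t
  define \<beta> where "\<beta> n = 6 * (gam n)\<^sup>2" for n
  define Wf where "Wf n st = (norm (fst st - xstar))\<^sup>2 + \<beta> n * Ssum (snd st)" for n st
  define w where "w n = (\<integral>\<^sup>+\<omega>. ennreal (Wf n (ST (n - 1) \<omega>)) \<partial>M)" for n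
  define Ss where "Ss = (\<Sum>j\<in>{1..N}. (norm (g j xstar))\<^sup>2)"
  define S0 where "S0 = 3 * Ss / real N"
  have Npos: "real N > 0" using N by simp
  have gm[measurable]: "g k \<in> borel_measurable borel" if "k \<in> {1..N}" for k
    by (rule grad_meas[OF grad[OF that]])
  have U'm: "U' j \<in> measurable M (count_space UNIV)" for j
  proof (cases "2 \<le> j")
    case True
    have "(\<lambda>\<omega>. cl N (U j \<omega>)) \<in> measurable M (count_space UNIV)"
      using measurable_compose[OF U_meas[OF True], of "cl N" "count_space UNIV"] by (simp add: o_def)
    then show ?thesis using True by (simp add: U'_def[abs_def])
  next
    case False then show ?thesis by (simp add: U'_def[abs_def])
  qed
  have U'N: "U' j \<omega> \<in> {1..N}" for j \<omega> using N by (auto simp: U'_def cl_def)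
  have STm: "(\<lambda>\<omega>. fst (ST m \<omega>)) \<in> borel_measurable M \<and>
      (\<forall>k\<in>{1..N}. (\<lambda>\<omega>. snd (ST m \<omega>) k) \<in> borel_measurable M)" for m
    unfolding ST_def by (rule saga_meas[OF gm X0(1) X1(1) U'm U'N])
  have Wm: "(\<lambda>\<omega>. Wf n (ST m \<omega>)) \<in> borel_measurable M" for n m
  proof -
    have [measurable]: "(\<lambda>\<omega>. fst (ST m \<omega>)) \<in> borel_measurable M" using STm by blast
    have "(\<lambda>\<omega>. (norm (snd (ST m \<omega>) j - g j xstar))\<^sup>2) \<in> borel_measurable M" if j: "j \<in> {1..N}" for j
    proof -
      have [measurable]: "(\<lambda>\<omega>. snd (ST m \<omega>) j) \<in> borel_measurable M" using STm j by blast
      show ?thesis by measurable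
    qed
    then have "(\<lambda>\<omega>. Ssum (snd (ST m \<omega>))) \<in> borel_measurable M"
      unfolding Ssum_def by (intro borel_measurable_sum) auto
    then show ?thesis unfolding Wf_def by measurable
  qed

  have zero: "(\<Sum>k\<in>{1..N}. g k xstar) = 0"
    using A1_zero Npos by simp
  have A3s: "(\<Sum>k\<in>{1..N}. (norm (g k x - g k xstar))\<^sup>2) \<le> real N * L * (norm (x - xstar))\<^sup>2" for x
  proof -
    have "(1 / real N) * (\<Sum>k\<in>{1..N}. (norm (g k x - g k xstar))\<^sup>2) \<le> L * (norm (x - xstar))\<^sup>2"
      by (rule A3(2))
    then show ?thesis using Npos by (simp add: field_simps)
  qed
  have A5s: "real N * \<mu> * (norm (x - xstar))\<^sup>2 \<le> (x - xstar) \<bullet> (\<Sum>k\<in>{1..N}. g k x)" for x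
  proof -
    have "\<mu> * (norm (x - xstar))\<^sup>2 \<le> (1 / real N) * ((x - xstar) \<bullet> (\<Sum>k\<in>{1..N}. g k x))"
      using A5(2)[of x] by (simp add: inner_scaleR_right)
    then show ?thesis using Npos by (simp add: field_simps)
  qed
  have Ssum0: "Ssum t \<ge> 0" for t unfolding Ssum_def by (intro sum_nonneg) auto
  have gam0: "gam n \<ge> 0" for n using c by (simp add: gam_def)
  have Wf_ge: "(norm (fst st - xstar))\<^sup>2 \<le> Wf n st" for n st
    using Ssum0 by (simp add: Wf_def \<beta>_def)
  have aeU: "AE \<omega> in M. \<forall>j. 2 \<le> j \<longrightarrow> U j \<omega> \<in> {1..N}"
  proof -
    have "AE \<omega> in M. 2 \<le> j \<longrightarrow> U j \<omega> \<in> {1..N}" for j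
    proof (cases "2 \<le> j")
      case True
      have "AE k in distr M (count_space UNIV) (U j). k \<in> {1..N}"
        unfolding U_unif[OF True] using N by (simp add: AE_measure_pmf_iff)
      then have "AE \<omega> in M. U j \<omega> \<in> {1..N}"
        by (subst (asm) AE_distr_iff) (auto intro: U_meas[OF True])
      then show ?thesis by simp
    qed simp
    then show ?thesis by (simp add: AE_all_countable)
  qed
  have ae_eq: "AE \<omega> in M. \<forall>m. saga_st N g lam gam (X0 \<omega>) (X1 \<omega>) (\<lambda>j. U j \<omega>) m = ST m \<omega>"
    using aeU
  proof eventually_elim
    case (elim \<omega>)
    show ?case
    proof
      fix m
      show "saga_st N g lam gam (X0 \<omega>) (X1 \<omega>) (\<lambda>j. U j \<omega>) m = ST m \<omega>"
        unfolding ST_def using elim by (intro saga_st_cong) (auto simp: U'_def cl_def)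
    qed
  qed

  have w1: "w 1 < \<infinity>"
  proof -
    define Bd where "Bd \<omega> = 2 * (norm (X1 \<omega>))\<^sup>2 + 2 * (norm xstar)\<^sup>2
        + \<beta> 1 * (real N * L * (2 * (norm (X0 \<omega>))\<^sup>2 + 2 * (norm xstar)\<^sup>2))" for \<omega>
    have sq: "(norm (a - b))\<^sup>2 \<le> 2 * (norm a)\<^sup>2 + 2 * (norm b)\<^sup>2" for a b :: 'a
    proof -
      have "norm (a - b) \<le> norm a + norm b" by (rule norm_triangle_ineq4)
      then have "(norm (a - b))\<^sup>2 \<le> (norm a + norm b)\<^sup>2" by (simp add: power_mono)
      also have "\<dots> \<le> 2 * (norm a)\<^sup>2 + 2 * (norm b)\<^sup>2"
      proof -
        have "0 \<le> (norm a - norm b)\<^sup>2" by simp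
        then show ?thesis by (simp add: power2_eq_square algebra_simps)
      qed
      finally show ?thesis .
    qed
    have b1: "\<beta> 1 \<ge> 0" by (simp add: \<beta>_def)
    have le: "Wf 1 (ST 0 \<omega>) \<le> Bd \<omega>" for \<omega>
    proof -
      have "Ssum (snd (ST 0 \<omega>)) \<le> real N * L * (norm (X0 \<omega> - xstar))\<^sup>2"
        using A3s[of "X0 \<omega>"] by (simp add: ST_def Ssum_def)
      also have "\<dots> \<le> real N * L * (2 * (norm (X0 \<omega>))\<^sup>2 + 2 * (norm xstar)\<^sup>2)"
        using sq[of "X0 \<omega>" xstar] Npos A3(1) by (intro mult_left_mono) auto
      finally have "\<beta> 1 * Ssum (snd (ST 0 \<omega>)) \<le> \<beta> 1 * (real N * L * (2 * (norm (X0 \<omega>))\<^sup>2 + 2 * (norm xstar)\<^sup>2))"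
        using b1 by (intro mult_left_mono) auto
      moreover have "(norm (fst (ST 0 \<omega>) - xstar))\<^sup>2 \<le> 2 * (norm (X1 \<omega>))\<^sup>2 + 2 * (norm xstar)\<^sup>2"
        using sq[of "X1 \<omega>" xstar] by (simp add: ST_def)
      ultimately show ?thesis by (simp add: Wf_def Bd_def)
    qed
    have intB: "integrable M Bd"
      unfolding Bd_def using X0(2) X1(2) by auto
    have B0: "Bd \<omega> \<ge> 0" for \<omega>
      using Npos A3(1) b1 by (auto simp: Bd_def intro!: add_nonneg_nonneg mult_nonneg_nonneg)
    have "w 1 \<le> (\<integral>\<^sup>+\<omega>. ennreal (Bd \<omega>) \<partial>M)"
      unfolding w_def using le[simplified] by (intro nn_integral_mono ennreal_leI) simp
    also have "\<dots> = ennreal (integral\<^sup>L M Bd)"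
      using intB B0 by (intro nn_integral_eq_integral) auto
    also have "\<dots> < \<infinity>" by simp
    finally show ?thesis .
  qed
  have rec: "w (Suc n) \<le> ennreal (max (1 - 2 * (c / real n powr \<alpha>) * \<mu> + 9 * L * (c / real n powr \<alpha>)\<^sup>2) (1 - 1 / (2 * real N))) * w n
       + ennreal (S0 * (c / real n powr \<alpha>)\<^sup>2)" if n: "n \<ge> 1" for n
  proof -
    obtain m where m: "n = Suc m" using n by (cases n) auto
    define q where "q = max (1 - 2 * (gam (Suc m)) * \<mu> + 9 * L * (gam (Suc m))\<^sup>2) (1 - 1 / (2 * real N))"
    have q0: "q \<ge> 0" using Npos by (auto simp: q_def field_simps intro: max.coboundedI2)
    define A where "A = insert (0::nat) {2..Suc m}"
    define B where "B = {Suc (Suc m)}"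
    define Mz where "Mz = (borel :: ('a \<times> 'a) measure) \<Otimes>\<^sub>M count_space (UNIV::nat set)"
    define Zf where "Zf i \<omega> = (if i = 0 then ((X0 \<omega>, X1 \<omega>), 0::nat) else ((0::'a, 0::'a), U i \<omega>))" for i \<omega>
    define Y where "Y \<omega> = restrict (\<lambda>i. Zf i \<omega>) A" for \<omega>
    have Xm: "(\<lambda>\<omega>. (X0 \<omega>, X1 \<omega>)) \<in> borel_measurable M" using X0(1) X1(1) by measurable
    have iZ: "indep_vars (\<lambda>_. Mz) Zf (insert 0 {2..})"
      unfolding Mz_def Zf_def[abs_def] by (rule indep_Z[OF Xm U_meas U_indep X_U_indep])
    have iv0: "indep_var (PiM A (\<lambda>_. Mz)) Y (PiM B (\<lambda>_. Mz)) (\<lambda>\<omega>. restrict (\<lambda>i. Zf i \<omega>) B)"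
      unfolding Y_def[abs_def] by (rule indep_var_restrict[OF iZ]) (auto simp: A_def B_def)
    define uu where "uu p k j = (if j = Suc (Suc m) then cl N k else if 2 \<le> j \<and> j \<le> Suc m then cl N (snd (p j)) else 1)"
      for p :: "nat \<Rightarrow> ('a \<times> 'a) \<times> nat" and k j
    define hh where "hh p k = Wf (Suc m) (saga_st N g lam gam (fst (fst (p 0))) (snd (fst (p 0))) (uu p k) (Suc m))" for p k
    have hm: "(\<lambda>z. ennreal (hh (fst z) (snd z))) \<in> borel_measurable (PiM A (\<lambda>_. Mz) \<Otimes>\<^sub>M count_space UNIV)"
    proof -
      let ?S = "PiM A (\<lambda>_. Mz) \<Otimes>\<^sub>M count_space (UNIV::nat set)"
      have pj: "(\<lambda>z. fst (z::(nat \<Rightarrow> ('a\<times>'a)\<times>nat) \<times> nat) j) \<in> measurable ?S Mz" if "j \<in> A" for j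
        by (rule measurable_compose[OF measurable_fst measurable_component_singleton]) (use that in simp)
      have fstb: "(fst :: 'a \<times> 'a \<Rightarrow> 'a) \<in> borel_measurable borel"
        by (rule borel_measurable_continuous_onI[OF continuous_on_fst[OF continuous_on_id]])
      have sndb: "(snd :: 'a \<times> 'a \<Rightarrow> 'a) \<in> borel_measurable borel"
        by (rule borel_measurable_continuous_onI[OF continuous_on_snd[OF continuous_on_id]])
      have fMz: "fst \<in> measurable Mz (borel :: ('a \<times> 'a) measure)" by (simp add: Mz_def)
      have sMz: "snd \<in> measurable Mz (count_space (UNIV::nat set))" by (simp add: Mz_def)
      have p0: "(\<lambda>z. fst (fst z 0)) \<in> measurable ?S (borel :: ('a \<times> 'a) measure)"
        using measurable_compose[OF pj fMz, of 0] by (simp add: A_def)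
      have x0m: "(\<lambda>z. fst (fst (fst z 0))) \<in> borel_measurable ?S"
        using measurable_compose[OF p0 fstb] by (simp add: o_def)
      have x1m: "(\<lambda>z. snd (fst (fst z 0))) \<in> borel_measurable ?S"
        using measurable_compose[OF p0 sndb] by (simp add: o_def)
      have um: "(\<lambda>z. uu (fst z) (snd z) j) \<in> measurable ?S (count_space UNIV)" for j
      proof (cases "j = Suc (Suc m)")
        case True
        have "(\<lambda>z. cl N (snd z)) \<in> measurable ?S (count_space UNIV)"
          by (rule measurable_compose[OF measurable_snd]) simp
        then show ?thesis using True by (simp add: uu_def)
      next
        case F: False
        show ?thesis
        proof (cases "2 \<le> j \<and> j \<le> Suc m")
          case True
          then have "j \<in> A" by (auto simp: A_def)
          have "(\<lambda>z. snd (fst z j)) \<in> measurable ?S (count_space UNIV)"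
            using measurable_compose[OF pj[OF \<open>j \<in> A\<close>] sMz] by (simp add: o_def)
          then have "(\<lambda>z. cl N (snd (fst z j))) \<in> measurable ?S (count_space UNIV)"
            by (rule measurable_compose) simp
          then show ?thesis using True F by (simp add: uu_def)
        next
          case False
          have e: "(\<lambda>z. uu (fst z) (snd z) j) = (\<lambda>z. 1)"
            using F False by (auto simp: uu_def fun_eq_iff)
          show ?thesis unfolding e by simp
        qed
      qed
      have uN: "uu (fst z) (snd z) j \<in> {1..N}" for z j using N by (auto simp: uu_def cl_def)
      have SM: "(\<lambda>z. fst (saga_st N g lam gam (fst (fst (fst z 0))) (snd (fst (fst z 0))) (\<lambda>j. uu (fst z) (snd z) j) (Suc m))) \<in> borel_measurable ?S \<and>
          (\<forall>k\<in>{1..N}. (\<lambda>z. snd (saga_st N g lam gam (fst (fst (fst z 0))) (snd (fst (fst z 0))) (\<lambda>j. uu (fst z) (snd z) j) (Suc m)) k) \<in> borel_measurable ?S)"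
        by (rule saga_meas[OF gm x0m x1m um uN])
      have F1: "(\<lambda>z. fst (saga_st N g lam gam (fst (fst (fst z 0))) (snd (fst (fst z 0))) (\<lambda>j. uu (fst z) (snd z) j) (Suc m))) \<in> borel_measurable ?S"
        using SM by blast
      have "(\<lambda>z. (norm (snd (saga_st N g lam gam (fst (fst (fst z 0))) (snd (fst (fst z 0))) (\<lambda>j. uu (fst z) (snd z) j) (Suc m)) j - g j xstar))\<^sup>2) \<in> borel_measurable ?S"
        if j: "j \<in> {1..N}" for j
      proof -
        have [measurable]: "(\<lambda>z. snd (saga_st N g lam gam (fst (fst (fst z 0))) (snd (fst (fst z 0))) (\<lambda>j. uu (fst z) (snd z) j) (Suc m)) j) \<in> borel_measurable ?S"
          using SM j by blast
        show ?thesis by measurable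
      qed
      then have Sm: "(\<lambda>z. Ssum (snd (saga_st N g lam gam (fst (fst (fst z 0))) (snd (fst (fst z 0))) (\<lambda>j. uu (fst z) (snd z) j) (Suc m)))) \<in> borel_measurable ?S"
        unfolding Ssum_def by (rule borel_measurable_sum)
      have Fm: "(\<lambda>z. (norm (fst (saga_st N g lam gam (fst (fst (fst z 0))) (snd (fst (fst z 0))) (\<lambda>j. uu (fst z) (snd z) j) (Suc m)) - xstar))\<^sup>2) \<in> borel_measurable ?S"
      proof -
        have cont: "continuous_on UNIV (\<lambda>y::'a. (norm (y - xstar))\<^sup>2)" by (intro continuous_intros)
        show ?thesis using measurable_compose[OF F1 borel_measurable_continuous_onI[OF cont]] by (simp only: o_def)
      qed
      have "(\<lambda>z. (norm (fst (saga_st N g lam gam (fst (fst (fst z 0))) (snd (fst (fst z 0))) (\<lambda>j. uu (fst z) (snd z) j) (Suc m)) - xstar))\<^sup>2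
         + \<beta> (Suc m) * Ssum (snd (saga_st N g lam gam (fst (fst (fst z 0))) (snd (fst (fst z 0))) (\<lambda>j. uu (fst z) (snd z) j) (Suc m)))) \<in> borel_measurable ?S"
        by (rule borel_measurable_add[OF Fm borel_measurable_times[OF borel_measurable_const Sm]])
      moreover have "(\<lambda>z. hh (fst z) (snd z)) = (\<lambda>z. (norm (fst (saga_st N g lam gam (fst (fst (fst z 0))) (snd (fst (fst z 0))) (\<lambda>j. uu (fst z) (snd z) j) (Suc m)) - xstar))\<^sup>2
         + \<beta> (Suc m) * Ssum (snd (saga_st N g lam gam (fst (fst (fst z 0))) (snd (fst (fst z 0))) (\<lambda>j. uu (fst z) (snd z) j) (Suc m))))"
        by (simp only: hh_def Wf_def)
      ultimately have hhm: "(\<lambda>z. hh (fst z) (snd z)) \<in> borel_measurable ?S" by (simp only:)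
      show ?thesis using measurable_compose[OF hhm measurable_ennreal] by (simp add: o_def)
    qed
    have Y0: "Y \<omega> 0 = ((X0 \<omega>, X1 \<omega>), 0)" for \<omega> by (simp add: Y_def A_def Zf_def)
    have Yj: "cl N (snd (Y \<omega> j)) = U' j \<omega>" if "2 \<le> j" "j \<le> Suc m" for \<omega> j
      using that by (simp add: Y_def A_def Zf_def U'_def)
    have hY: "hh (Y \<omega>) (U (Suc (Suc m)) \<omega>) = Wf (Suc m) (ST (Suc m) \<omega>)" for \<omega>
      unfolding hh_def ST_def Y0 fst_conv snd_conv
      by (intro arg_cong[where f="Wf (Suc m)"] saga_st_cong) (auto simp: uu_def Yj U'_def)
    have hk: "hh (Y \<omega>) k = Wf (Suc m) (sstep N g lam (gam (Suc m)) (ST m \<omega>) k)" if k: "k \<in> {1..N}" for \<omega> k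
    proof -
      have "saga_st N g lam gam (X0 \<omega>) (X1 \<omega>) (uu (Y \<omega>) k) m = ST m \<omega>"
        unfolding ST_def by (intro saga_st_cong) (auto simp: uu_def Yj)
      moreover have "uu (Y \<omega>) k (Suc (Suc m)) = k" using k by (simp add: uu_def cl_def)
      ultimately show ?thesis
        unfolding hh_def Y0 fst_conv snd_conv by (simp only: saga_st_Suc')
    qed
    have gmono: "gam (Suc (Suc m)) \<le> gam (Suc m)"
      unfolding gam_def using c alpha
      by (intro divide_left_mono powr_mono2 mult_pos_pos) (auto simp del: of_nat_Suc)
    have bmono: "\<beta> (Suc (Suc m)) \<le> \<beta> (Suc m)"
      unfolding \<beta>_def using gmono gam0 by (simp add: power_mono)
    have "w (Suc n) = (\<integral>\<^sup>+\<omega>. ennreal (Wf (Suc (Suc m)) (ST (Suc m) \<omega>)) \<partial>M)"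
      by (simp add: w_def m)
    also have "\<dots> \<le> (\<integral>\<^sup>+\<omega>. ennreal (Wf (Suc m) (ST (Suc m) \<omega>)) \<partial>M)"
      using bmono Ssum0 by (intro nn_integral_mono ennreal_leI) (simp add: Wf_def mult_right_mono)
    also have "\<dots> = (\<integral>\<^sup>+\<omega>. ennreal (hh (Y \<omega>) (U (Suc (Suc m)) \<omega>)) \<partial>M)"
      by (simp add: hY)
    also have "\<dots> = (\<integral>\<^sup>+\<omega>. (\<Sum>k\<in>{1..N}. ennreal (hh (Y \<omega>) k)) / of_nat (card {1..N}) \<partial>M)"
    proof -
      have sMz': "snd \<in> measurable Mz (count_space (UNIV::nat set))" by (simp add: Mz_def)
      have m2: "(\<lambda>p. snd (p (Suc (Suc m)))) \<in> measurable (PiM B (\<lambda>_. Mz)) (count_space UNIV)"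
        using measurable_compose[OF measurable_component_singleton[of "Suc (Suc m)" B "\<lambda>_. Mz"] sMz']
        by (simp add: B_def)
      have VU: "(\<lambda>\<omega>. snd (restrict (\<lambda>i. Zf i \<omega>) B (Suc (Suc m)))) = U (Suc (Suc m))"
        by (auto simp: fun_eq_iff B_def Zf_def)
      have d: "distr M (count_space UNIV) (\<lambda>\<omega>. snd (restrict (\<lambda>i. Zf i \<omega>) B (Suc (Suc m)))) = measure_pmf (pmf_of_set {1..N})"
        unfolding VU by (rule U_unif) simp
      have "(\<integral>\<^sup>+\<omega>. ennreal (hh (Y \<omega>) (snd (restrict (\<lambda>i. Zf i \<omega>) B (Suc (Suc m))))) \<partial>M)
          = (\<integral>\<^sup>+\<omega>. (\<Sum>k\<in>{1..N}. ennreal (hh (Y \<omega>) k)) / of_nat (card {1..N}) \<partial>M)"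
        using exp_indep[OF iv0 m2 d _ _ hm] N by simp
      moreover have "snd (restrict (\<lambda>i. Zf i \<omega>) B (Suc (Suc m))) = U (Suc (Suc m)) \<omega>" for \<omega>
        by (simp add: B_def Zf_def)
      ultimately show ?thesis by (simp only:)
    qed
    also have "\<dots> = (\<integral>\<^sup>+\<omega>. (\<Sum>k\<in>{1..N}. ennreal (Wf (Suc m) (sstep N g lam (gam (Suc m)) (ST m \<omega>) k))) / of_nat (card {1..N}) \<partial>M)"
      by (intro nn_integral_cong arg_cong2[where f="(/)"] sum.cong refl) (simp add: hk)
    also have "\<dots> \<le> (\<integral>\<^sup>+\<omega>. ennreal (q * Wf (Suc m) (ST m \<omega>) + S0 * (gam (Suc m))\<^sup>2) \<partial>M)"
    proof (intro nn_integral_mono)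
      fix \<omega>
      have st: "ST m \<omega> = (fst (ST m \<omega>), snd (ST m \<omega>))" by simp
      have "(\<Sum>k\<in>{1..N}. ennreal (Wf (Suc m) (sstep N g lam (gam (Suc m)) (fst (ST m \<omega>), snd (ST m \<omega>)) k))) / of_nat (card {1..N})
          \<le> ennreal (q * Wf (Suc m) (fst (ST m \<omega>), snd (ST m \<omega>)) + S0 * (gam (Suc m))\<^sup>2)"
        unfolding Wf_def \<beta>_def Ssum_def q_def S0_def Ss_def fst_conv snd_conv
        by (rule avg_bound[OF N lam gam0[of "Suc m"] less_imp_le[OF A3(1)] zero A3s[of "fst (ST m \<omega>)"] A5s[of "fst (ST m \<omega>)"]])
      then show "(\<Sum>k\<in>{1..N}. ennreal (Wf (Suc m) (sstep N g lam (gam (Suc m)) (ST m \<omega>) k))) / of_nat (card {1..N})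
          \<le> ennreal (q * Wf (Suc m) (ST m \<omega>) + S0 * (gam (Suc m))\<^sup>2)"
        by (simp only: st[symmetric])
    qed
    also have "\<dots> = ennreal q * w n + ennreal (S0 * (gam (Suc m))\<^sup>2)"
    proof -
      have W0: "Wf n st \<ge> 0" for n st by (rule order_trans[OF zero_le_power2 Wf_ge])
      have S00: "S0 \<ge> 0" by (simp add: S0_def Ss_def sum_nonneg)
      have "(\<integral>\<^sup>+\<omega>. ennreal (q * Wf (Suc m) (ST m \<omega>) + S0 * (gam (Suc m))\<^sup>2) \<partial>M)
          = (\<integral>\<^sup>+\<omega>. ennreal q * ennreal (Wf (Suc m) (ST m \<omega>)) + ennreal (S0 * (gam (Suc m))\<^sup>2) \<partial>M)"
        using q0 W0 S00 by (intro nn_integral_cong) (simp add: ennreal_plus ennreal_mult)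
      also have "\<dots> = ennreal q * (\<integral>\<^sup>+\<omega>. ennreal (Wf (Suc m) (ST m \<omega>)) \<partial>M) + ennreal (S0 * (gam (Suc m))\<^sup>2)"
        using Wm[of "Suc m" m] by (simp add: nn_integral_add nn_integral_cmult emeasure_space_1)
      finally show ?thesis by (simp add: w_def m)
    qed
    finally show ?thesis by (simp add: m q_def gam_def)
  qed
  obtain K where K: "K > 0" "\<forall>n\<ge>1. w n \<le> ennreal (K / real n powr \<alpha>)"
  proof (rule exE[OF rate[OF c _ alpha(2) A5(1) less_imp_le[OF A3(1)] step2 _ _ _ w1 rec]])
    show "0 < \<alpha>" using alpha by simp
    show "0 \<le> 1 - 1 / (2 * real N)" "1 - 1 / (2 * real N) < 1" using Npos by (auto simp: field_simps)
    show "0 \<le> S0" by (simp add: S0_def Ss_def sum_nonneg)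
  qed auto
  show ?thesis
  proof (intro exI[of _ K] conjI allI impI)
    show "K > 0" by (rule K(1))
    fix n :: nat assume n: "n \<ge> 1"
    then obtain m where m: "n = Suc m" by (cases n) auto
    have "(\<integral>\<^sup>+ \<omega>. ennreal ((norm (saga_X N g lam (\<lambda>n. c / real n powr \<alpha>) (X0 \<omega>) (X1 \<omega>) (\<lambda>j. U j \<omega>) n - xstar))\<^sup>2) \<partial>M)
        = (\<integral>\<^sup>+ \<omega>. ennreal ((norm (fst (ST m \<omega>) - xstar))\<^sup>2) \<partial>M)"
      using ae_eq by (intro nn_integral_cong_AE) (auto simp: m gam_def)
    also have "\<dots> \<le> w n"
      unfolding w_def m by (intro nn_integral_mono ennreal_leI) (simp add: Wf_ge)
    also have "\<dots> \<le> ennreal (K / real n powr \<alpha>)" using K(2) n by blast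
    finally show "(\<integral>\<^sup>+ \<omega>. ennreal ((norm (saga_X N g lam (\<lambda>n. c / real n powr \<alpha>) (X0 \<omega>) (X1 \<omega>) (\<lambda>j. U j \<omega>) n - xstar))\<^sup>2) \<partial>M)
      \<le> ennreal (K / real n powr \<alpha>)" .
  qed
qed

end
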